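(* For integers $n,k\ge1$, the set $C^0_{n,k,3}$ is the Zariski closure of $$\{H_1^3+\dots+H_k^3:\ H_1,\dots,H_k\in V \text{ linearly dependent}\}\subseteq\operatorname{Sym}^3V.$$
   Context: $V$ is the space of real linear forms in $u=(u_1,\dots,u_n)$ (identified with $\mathbb{R}^n$), and $\operatorname{Sym}^3V$ the space of real cubic forms. $\Theta^0_{n,k}=\{((L_1,\dots,L_k),(\lambda_1,\dots,\lambda_k))\in V^k\times\mathbb{R}^k:\sum_i\lambda_i=1,\ \sum_i\lambda_iL_i=0\}$, $\phi_{n,k,3}:\Theta^0_{n,k}\to\operatorname{Sym}^3V$, $((L_i),(\lambda_i))\mapsto\lambda_1L_1^3+\dots+\lambda_kL_k^3$, and $C^0_{n,k,3}$ is the Zariski closure of the image of $\phi_{n,k,3}$. *)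

theory Defs
  imports "HOL-Analysis.Analysis"
begin

inductive poly_fun :: "('a::euclidean_space \<Rightarrow> real) \<Rightarrow> bool" where
  pf_const: "poly_fun (\<lambda>x. c)"
| pf_coord: "b \<in> Basis \<Longrightarrow> poly_fun (\<lambda>x. x \<bullet> b)"
| pf_add: "poly_fun p \<Longrightarrow> poly_fun q \<Longrightarrow> poly_fun (\<lambda>x. p x + q x)"
| pf_mult: "poly_fun p \<Longrightarrow> poly_fun q \<Longrightarrow> poly_fun (\<lambda>x. p x * q x)"

definition zariski_closed :: "'a::euclidean_space set \<Rightarrow> bool" where
  "zariski_closed S \<longleftrightarrow> (\<exists>P. (\<forall>p\<in>P. poly_fun p) \<and> S = {x. \<forall>p\<in>P. p x = 0})"

definition zariski_closure :: "'a::euclidean_space set \<Rightarrow> 'a set" where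
  "zariski_closure S = \<Inter>{T. zariski_closed T \<and> S \<subseteq> T}"

text \<open>Cubic forms are represented by their symmetric coefficient tensors in
  real^'n^'n^'n; the cube L^3 of a linear form L corresponds to the tensor L (x) L (x) L.\<close>
definition cube3 :: "real^'n \<Rightarrow> real^'n^'n^'n" where
  "cube3 L = (\<chi> a b c. L$a * L$b * L$c)"

definition Theta0 :: "(('k::finite \<Rightarrow> real^'n) \<times> ('k \<Rightarrow> real)) set" where
  "Theta0 = {(L, lam). (\<Sum>i\<in>UNIV. lam i) = 1 \<and> (\<Sum>i\<in>UNIV. lam i *\<^sub>R L i) = 0}"

definition phi3 :: "('k::finite \<Rightarrow> real^'n) \<times> ('k \<Rightarrow> real) \<Rightarrow> real^'n^'n^'n" where
  "phi3 = (\<lambda>(L, lam). \<Sum>i\<in>UNIV. lam i *\<^sub>R cube3 (L i))"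

definition C0 :: "'k::finite itself \<Rightarrow> (real^'n^'n^'n) set" where
  "C0 _ = zariski_closure (phi3 ` (Theta0 :: (('k \<Rightarrow> real^'n) \<times> ('k \<Rightarrow> real)) set))"

definition lin_dep_family :: "('k::finite \<Rightarrow> real^'n) \<Rightarrow> bool" where
  "lin_dep_family H \<longleftrightarrow> (\<exists>c. c \<noteq> (\<lambda>_. 0) \<and> (\<Sum>i\<in>UNIV. c i *\<^sub>R H i) = 0)"

end

theory Submission imports Defs "HOL-Computational_Algebra.Polynomial" begin

lemma poly_fun_curve:
  fixes X0 X1 X2 X3 :: "'a::euclidean_space"
  assumes "poly_fun p"
  shows "\<exists>q. \<forall>t. p (X0 + t *\<^sub>R X1 + t^2 *\<^sub>R X2 + t^3 *\<^sub>R X3) = poly q t"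
  using assms
proof induction
  case (pf_const c)
  then show ?case by (intro exI[of _ "[:c:]"]) simp
next
  case (pf_coord b)
  show ?case
    by (intro exI[of _ "[:X0 \<bullet> b, X1 \<bullet> b, X2 \<bullet> b, X3 \<bullet> b:]"])
      (simp add: inner_add_left algebra_simps power2_eq_square power3_eq_cube)
next
  case (pf_add p q)
  then obtain q1 q2 where "\<forall>t. p (X0 + t *\<^sub>R X1 + t^2 *\<^sub>R X2 + t^3 *\<^sub>R X3) = poly q1 t"
     "\<forall>t. q (X0 + t *\<^sub>R X1 + t^2 *\<^sub>R X2 + t^3 *\<^sub>R X3) = poly q2 t" by blast
  then show ?case by (intro exI[of _ "q1 + q2"]) simp
next
  case (pf_mult p q)
  then obtain q1 q2 where "\<forall>t. p (X0 + t *\<^sub>R X1 + t^2 *\<^sub>R X2 + t^3 *\<^sub>R X3) = poly q1 t"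
     "\<forall>t. q (X0 + t *\<^sub>R X1 + t^2 *\<^sub>R X2 + t^3 *\<^sub>R X3) = poly q2 t" by blast
  then show ?case by (intro exI[of _ "q1 * q2"]) simp
qed

lemma poly_fun_curve_zero:
  fixes X0 X1 X2 X3 :: "'a::euclidean_space"
  assumes "poly_fun p" and "\<And>t. t > M \<Longrightarrow> p (X0 + t *\<^sub>R X1 + t^2 *\<^sub>R X2 + t^3 *\<^sub>R X3) = 0"
  shows "p X0 = 0"
proof -
  obtain q where q: "\<And>t. p (X0 + t *\<^sub>R X1 + t^2 *\<^sub>R X2 + t^3 *\<^sub>R X3) = poly q t"
    using poly_fun_curve[OF assms(1)] by blast
  have "{M<..} \<subseteq> {x. poly q x = 0}" using assms(2) q by auto
  hence "q = 0" using poly_roots_finite infinite_Ioi finite_subset by blast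
  thus ?thesis using q[of 0] by simp
qed

lemma cube3_scale: "cube3 (a *\<^sub>R X) = a^3 *\<^sub>R cube3 X"
  by (simp add: cube3_def vec_eq_iff power3_eq_cube)

lemma cube3_line: "\<exists>X1 X2 X3. \<forall>t. cube3 (A + t *\<^sub>R B) = cube3 A + t *\<^sub>R X1 + t^2 *\<^sub>R X2 + t^3 *\<^sub>R X3"
  apply (rule exI[of _ "\<chi> a b c. B$a*A$b*A$c + A$a*B$b*A$c + A$a*A$b*B$c"])
  apply (rule exI[of _ "\<chi> a b c. A$a*B$b*B$c + B$a*A$b*B$c + B$a*B$b*A$c"])
  apply (rule exI[of _ "cube3 B"])
  by (simp add: cube3_def vec_eq_iff algebra_simps power2_eq_square power3_eq_cube)

lemma pos_in_image:
  fixes G :: "'k::finite \<Rightarrow> real^'n"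
  assumes w: "\<And>i. w i > 0" and rel: "(\<Sum>i\<in>UNIV. w i *\<^sub>R G i) = 0"
  shows "(\<Sum>i\<in>UNIV. cube3 (G i)) \<in> phi3 ` (Theta0 :: (('k \<Rightarrow> real^'n) \<times> ('k \<Rightarrow> real)) set)"
proof -
  define r where "r i = sqrt (w i)" for i
  have r: "r i > 0" "r i ^ 2 = w i" for i using w[of i] by (auto simp: r_def)
  define s where "s = (\<Sum>i\<in>UNIV. r i ^ 3)"
  have s: "s > 0" unfolding s_def using r by (intro sum_pos) auto
  define lam where "lam i = r i ^ 3 / s" for i
  define L where "L i = (root 3 s / r i) *\<^sub>R G i" for i
  have rs: "root 3 s ^ 3 = s" using s by (simp add: real_root_pow_pos)
  have e1: "lam i * (root 3 s / r i)^3 = 1" for i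
    using r(1)[of i] s rs by (simp add: lam_def power_divide)
  have e2: "lam i * (root 3 s / r i) = (root 3 s / s) * w i" for i
    using r[of i] s by (simp add: lam_def power2_eq_square power3_eq_cube field_simps)
  have "(\<Sum>i\<in>UNIV. lam i) = 1" unfolding lam_def s_def[symmetric] sum_divide_distrib[symmetric]
    using s by simp
  moreover have "(\<Sum>i\<in>UNIV. lam i *\<^sub>R L i) = 0"
  proof -
    have "(\<Sum>i\<in>UNIV. lam i *\<^sub>R L i) = (\<Sum>i\<in>UNIV. (root 3 s / s) *\<^sub>R (w i *\<^sub>R G i))"
      by (intro sum.cong refl) (simp add: L_def e2[simplified])
    also have "\<dots> = (root 3 s / s) *\<^sub>R (\<Sum>i\<in>UNIV. w i *\<^sub>R G i)"
      by (simp add: scaleR_sum_right)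
    finally show ?thesis using rel by simp
  qed
  ultimately have "(L, lam) \<in> Theta0" by (simp add: Theta0_def)
  moreover have "phi3 (L, lam) = (\<Sum>i\<in>UNIV. cube3 (G i))"
    by (simp add: phi3_def L_def cube3_scale e1)
  ultimately show ?thesis by (metis image_eqI)
qed

lemma image_sub:
  fixes x :: "('k::finite \<Rightarrow> real^'n) \<times> ('k \<Rightarrow> real)"
  assumes "x \<in> Theta0"
  shows "phi3 x \<in> {(\<Sum>i\<in>UNIV. cube3 (H i)) | H :: 'k \<Rightarrow> real^'n. lin_dep_family H}"
proof -
  obtain L lam where x: "x = (L, lam)" by (cases x)
  have s1: "(\<Sum>i\<in>UNIV. lam i) = 1" and s0: "(\<Sum>i\<in>UNIV. lam i *\<^sub>R L i) = 0"
    using assms by (auto simp: x Theta0_def)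
  define H where "H i = root 3 (lam i) *\<^sub>R L i" for i
  have r3: "root 3 a ^ 3 = a" for a :: real by (simp add: odd_real_root_pow)
  have "lin_dep_family H" unfolding lin_dep_family_def
  proof (intro exI conjI)
    show "(\<lambda>i. (root 3 (lam i))^2) \<noteq> (\<lambda>_. 0)"
    proof
      assume z: "(\<lambda>i. (root 3 (lam i))^2) = (\<lambda>_. 0)"
      hence "lam i = 0" for i using fun_cong[OF z, of i] by simp
      thus False using s1 by simp
    qed
    show "(\<Sum>i\<in>UNIV. (root 3 (lam i))^2 *\<^sub>R H i) = 0"
    proof -
      have r3': "root 3 a ^ 2 * root 3 a = a" for a :: real
        using r3[of a] by (simp add: power2_eq_square power3_eq_cube)
      show ?thesis using s0 by (simp add: H_def r3')
    qed
  qed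
  moreover have "phi3 x = (\<Sum>i\<in>UNIV. cube3 (H i))"
    by (simp add: x phi3_def H_def cube3_scale r3)
  ultimately show ?thesis by blast
qed

lemma B_sub:
  fixes H :: "'k::finite \<Rightarrow> real^'n"
  assumes dep: "lin_dep_family H" and p: "poly_fun p"
    and van: "\<forall>y \<in> phi3 ` (Theta0 :: (('k \<Rightarrow> real^'n) \<times> ('k \<Rightarrow> real)) set). p y = 0"
  shows "p (\<Sum>i\<in>UNIV. cube3 (H i)) = 0"
proof -
  obtain c where c: "c \<noteq> (\<lambda>_. 0)" "(\<Sum>i\<in>UNIV. c i *\<^sub>R H i) = 0"
    using dep by (auto simp: lin_dep_family_def)
  obtain j where j: "c j \<noteq> 0" using c(1) by auto
  define d where "d i = c i / c j" for i
  have dj: "d j = 1" using j by (simp add: d_def)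
  have drel: "(\<Sum>i\<in>UNIV. d i *\<^sub>R H i) = 0"
  proof -
    have "(\<Sum>i\<in>UNIV. d i *\<^sub>R H i) = (1 / c j) *\<^sub>R (\<Sum>i\<in>UNIV. c i *\<^sub>R H i)"
      by (simp add: d_def scaleR_sum_right)
    thus ?thesis using c(2) by simp
  qed
  define Y where "Y = - (\<Sum>i\<in>UNIV - {j}. H i)"
  define K where "K = (\<Sum>i\<in>UNIV - {j}. cube3 (H i))"
  define G where "G t i = H i + (if i = j then t else 0) *\<^sub>R Y" for t i
  define M where "M = (\<Sum>i\<in>UNIV. \<bar>d i\<bar>)"
  have sumG: "(\<Sum>i\<in>UNIV. cube3 (G t i)) = K + cube3 (H j + t *\<^sub>R Y)" for t
  proof -
    have "(\<Sum>i\<in>UNIV. cube3 (G t i)) = cube3 (G t j) + (\<Sum>i\<in>UNIV - {j}. cube3 (G t i))"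
      using sum.remove[of UNIV j "\<lambda>i. cube3 (G t i)"] by simp
    also have "(\<Sum>i\<in>UNIV - {j}. cube3 (G t i)) = K"
      unfolding K_def by (intro sum.cong refl) (auto simp: G_def)
    finally show ?thesis by (simp add: G_def add.commute)
  qed
  have inA: "K + cube3 (H j + t *\<^sub>R Y) \<in> phi3 ` (Theta0 :: (('k \<Rightarrow> real^'n) \<times> ('k \<Rightarrow> real)) set)"
    if t: "t > M" for t
  proof -
    define w where "w i = d i + (if i = j then 0 else t)" for i
    have "w i > 0" for i
    proof (cases "i = j")
      case True thus ?thesis by (simp add: w_def dj)
    next
      case False
      have "\<bar>d i\<bar> \<le> M" unfolding M_def by (rule member_le_sum) auto
      thus ?thesis using t False by (simp add: w_def)
    qed
    moreover have "(\<Sum>i\<in>UNIV. w i *\<^sub>R G t i) = 0"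
    proof -
      have "(\<Sum>i\<in>UNIV. w i *\<^sub>R G t i) = (\<Sum>i\<in>UNIV. d i *\<^sub>R H i)
         + (\<Sum>i\<in>UNIV. (if i = j then 0 else t) *\<^sub>R H i) + (\<Sum>i\<in>UNIV. (w i * (if i = j then t else 0)) *\<^sub>R Y)"
        by (simp add: G_def w_def sum.distrib scaleR_add_left scaleR_add_right algebra_simps)
      also have "(\<Sum>i\<in>UNIV. (w i * (if i = j then t else 0)) *\<^sub>R Y) = (\<Sum>i\<in>UNIV. if i = j then t *\<^sub>R Y else 0)"
        by (intro sum.cong refl) (simp add: w_def dj)
      also have "\<dots> = t *\<^sub>R Y" by simp
      also have "(\<Sum>i\<in>UNIV. (if i = j then 0 else t) *\<^sub>R H i) = (\<Sum>i\<in>UNIV - {j}. (if i = j then 0 else t) *\<^sub>R H i)"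
        by (rule sum.mono_neutral_right) auto
      also have "\<dots> = (\<Sum>i\<in>UNIV - {j}. t *\<^sub>R H i)"
        by (intro sum.cong refl) auto
      also have "\<dots> = t *\<^sub>R (\<Sum>i\<in>UNIV - {j}. H i)"
        by (simp add: scaleR_sum_right)
      finally show ?thesis by (simp add: drel Y_def)
    qed
    ultimately show ?thesis using pos_in_image[of w "G t"] sumG by simp
  qed
  obtain X1 X2 X3 where X: "\<And>t. cube3 (H j + t *\<^sub>R Y) = cube3 (H j) + t *\<^sub>R X1 + t^2 *\<^sub>R X2 + t^3 *\<^sub>R X3"
    using cube3_line by blast
  have "p ((K + cube3 (H j)) + t *\<^sub>R X1 + t^2 *\<^sub>R X2 + t^3 *\<^sub>R X3) = 0" if "t > M" for t
  proof -
    have "p (K + cube3 (H j + t *\<^sub>R Y)) = 0" using van inA[OF that] by blast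
    thus ?thesis by (simp only: X add.assoc)
  qed
  hence "p (K + cube3 (H j)) = 0" by (rule poly_fun_curve_zero[OF p])
  moreover have "(\<Sum>i\<in>UNIV. cube3 (H i)) = K + cube3 (H j)"
    using sumG[of 0] by (simp add: G_def)
  ultimately show ?thesis by (simp only:)
qed

theorem lemma4p4:
  shows "C0 TYPE('k::finite) =
    zariski_closure {(\<Sum>i\<in>UNIV. cube3 (H i)) | H :: 'k \<Rightarrow> real^'n. lin_dep_family H}"
proof -
  let ?A = "phi3 ` (Theta0 :: (('k \<Rightarrow> real^'n) \<times> ('k \<Rightarrow> real)) set)"
  let ?B = "{(\<Sum>i\<in>UNIV. cube3 (H i)) | H :: 'k \<Rightarrow> real^'n. lin_dep_family H}"
  have AB: "?A \<subseteq> ?B" using image_sub by blast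
  have "\<And>T. zariski_closed T \<Longrightarrow> ?A \<subseteq> T \<Longrightarrow> ?B \<subseteq> T"
  proof
    fix T x assume T: "zariski_closed T" "?A \<subseteq> T" and x: "x \<in> ?B"
    obtain P where P: "\<forall>p\<in>P. poly_fun p" "T = {x. \<forall>p\<in>P. p x = 0}"
      using T(1) by (auto simp: zariski_closed_def)
    obtain H :: "'k \<Rightarrow> real^'n" where H: "x = (\<Sum>i\<in>UNIV. cube3 (H i))" "lin_dep_family H" using x by blast
    show "x \<in> T" unfolding P(2)
    proof (intro CollectI ballI)
      fix p assume "p \<in> P"
      thus "p x = 0" using B_sub[OF H(2), of p] P T(2) H(1) by blast
    qed
  qed
  hence "zariski_closure ?B \<subseteq> zariski_closure ?A"
    unfolding zariski_closure_def by blast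
  moreover have "zariski_closure ?A \<subseteq> zariski_closure ?B"
    using AB unfolding zariski_closure_def by blast
  ultimately show ?thesis unfolding C0_def by blast
qed

end
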